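(* Let $K$ be a field, $\mathcal A$ a commutative $K$-algebra, and $V$ a $K$-subspace of $\mathcal A$ such that every element of $\sqrt V$ is algebraic over $K$. Then $V$ is a Mathieu subspace of $\mathcal A$ if and only if $\sqrt V$ is an ideal of $\mathcal A$.
   Context: Algebras are unital. $\sqrt V$ is the set of $a\in\mathcal A$ with $a^m\in V$ for all sufficiently large $m$. A $K$-subspace $V$ of a commutative algebra $\mathcal A$ is a Mathieu subspace if whenever $a\in\mathcal A$ satisfies $a^m\in V$ for all $m\ge1$, then for every $b\in\mathcal A$ there is $N$ with $ba^m\in V$ for all $m\ge N$. *)

theory Defs
  imports "HOL-Computational_Algebra.Polynomial"
begin

text \<open>A commutative (unital) K-algebra is modelled as a commutative ring 'a together
with its structure map phi :: 'k => 'a, a unital ring homomorphism from the field 'k.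
Scalar multiplication c . a is phi c * a.\<close>

definition unital_ring_hom :: "('k::field \<Rightarrow> 'a::comm_ring_1) \<Rightarrow> bool" where
  "unital_ring_hom \<phi> \<longleftrightarrow> \<phi> 1 = 1 \<and> (\<forall>x y. \<phi> (x + y) = \<phi> x + \<phi> y) \<and> (\<forall>x y. \<phi> (x * y) = \<phi> x * \<phi> y)"

definition K_subspace :: "('k::field \<Rightarrow> 'a::comm_ring_1) \<Rightarrow> 'a set \<Rightarrow> bool" where
  "K_subspace \<phi> V \<longleftrightarrow> 0 \<in> V \<and> (\<forall>x\<in>V. \<forall>y\<in>V. x + y \<in> V) \<and> (\<forall>c. \<forall>x\<in>V. \<phi> c * x \<in> V)"

definition radical_set :: "'a::comm_ring_1 set \<Rightarrow> 'a set" where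
  "radical_set V = {a. \<exists>N. \<forall>m\<ge>N. a ^ m \<in> V}"

definition algebraic_over :: "('k::field \<Rightarrow> 'a::comm_ring_1) \<Rightarrow> 'a \<Rightarrow> bool" where
  "algebraic_over \<phi> a \<longleftrightarrow> (\<exists>p::'k poly. p \<noteq> 0 \<and> poly (map_poly \<phi> p) a = 0)"

definition mathieu_subspace :: "'a::comm_ring_1 set \<Rightarrow> bool" where
  "mathieu_subspace V \<longleftrightarrow>
     (\<forall>a. (\<forall>m\<ge>1. a ^ m \<in> V) \<longrightarrow> (\<forall>b. \<exists>N. \<forall>m\<ge>N. b * a ^ m \<in> V))"

definition is_ideal :: "'a::comm_ring_1 set \<Rightarrow> bool" where
  "is_ideal I \<longleftrightarrow> 0 \<in> I \<and> (\<forall>x\<in>I. \<forall>y\<in>I. x + y \<in> I) \<and> (\<forall>b. \<forall>x\<in>I. b * x \<in> I)"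

end

theory Submission
  imports Defs "HOL-Computational_Algebra.Computational_Algebra"
begin

lemma hom_0: assumes "unital_ring_hom \<phi>" shows "\<phi> 0 = 0"
proof -
  have "\<phi> (0+0) = \<phi> 0 + \<phi> 0" using assms unfolding unital_ring_hom_def by blast
  thus ?thesis by simp
qed

lemma hom_add: "unital_ring_hom \<phi> \<Longrightarrow> \<phi> (x + y) = \<phi> x + \<phi> y"
  unfolding unital_ring_hom_def by blast
lemma hom_mult: "unital_ring_hom \<phi> \<Longrightarrow> \<phi> (x * y) = \<phi> x * \<phi> y"
  unfolding unital_ring_hom_def by blast
lemma hom_1: "unital_ring_hom \<phi> \<Longrightarrow> \<phi> 1 = 1"
  unfolding unital_ring_hom_def by blast

lemma hom_neg1: assumes "unital_ring_hom \<phi>" shows "\<phi> (-1) = -1"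
proof -
  have "\<phi> (-1 + 1) = \<phi> (-1) + \<phi> 1" using hom_add[OF assms] .
  hence "0 = \<phi> (-1) + 1" using hom_0[OF assms] hom_1[OF assms] by simp
  thus ?thesis by (simp add: eq_neg_iff_add_eq_0)
qed

lemma mp_add: assumes "unital_ring_hom \<phi>"
  shows "map_poly \<phi> (p + q) = map_poly \<phi> p + map_poly \<phi> q"
  by (rule poly_eqI) (simp add: coeff_map_poly hom_0[OF assms] hom_add[OF assms])

lemma mp_smult: assumes "unital_ring_hom \<phi>"
  shows "map_poly \<phi> (smult a q) = smult (\<phi> a) (map_poly \<phi> q)"
  by (rule poly_eqI) (simp add: coeff_map_poly hom_0[OF assms] hom_mult[OF assms])

lemma mp_mult: assumes "unital_ring_hom \<phi>"
  shows "map_poly \<phi> (p * q) = map_poly \<phi> p * map_poly \<phi> q"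
proof (induction p)
  case 0 then show ?case by simp
next
  case (pCons a p)
  then show ?case
    by (simp add: mp_add[OF assms] mp_smult[OF assms] map_poly_pCons hom_0[OF assms])
qed

lemma mp_1: assumes "unital_ring_hom \<phi>" shows "map_poly \<phi> 1 = 1"
  by (simp add: one_pCons map_poly_pCons hom_0[OF assms] hom_1[OF assms] del: pCons_one)

lemma mp_x: assumes "unital_ring_hom \<phi>" shows "map_poly \<phi> [:0,1:] = [:0,1:]"
  by (simp add: map_poly_pCons hom_0[OF assms] hom_1[OF assms])

lemma mp_power: assumes "unital_ring_hom \<phi>"
  shows "map_poly \<phi> (p ^ n) = map_poly \<phi> p ^ n"
  by (induction n) (simp_all add: mp_1[OF assms] mp_mult[OF assms])

lemma ev_mult: assumes "unital_ring_hom \<phi>"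
  shows "poly (map_poly \<phi> (p * q)) y = poly (map_poly \<phi> p) y * poly (map_poly \<phi> q) y"
  by (simp add: mp_mult[OF assms])

lemma ev_add: assumes "unital_ring_hom \<phi>"
  shows "poly (map_poly \<phi> (p + q)) y = poly (map_poly \<phi> p) y + poly (map_poly \<phi> q) y"
  by (simp add: mp_add[OF assms])

lemma ev_1: assumes "unital_ring_hom \<phi>" shows "poly (map_poly \<phi> 1) y = 1"
  by (simp add: mp_1[OF assms])

lemma ev_xpow: assumes "unital_ring_hom \<phi>"
  shows "poly (map_poly \<phi> ([:0,1:] ^ n)) y = y ^ n"
  by (simp add: mp_power[OF assms] mp_x[OF assms])

lemma decomp:
  fixes \<phi> :: "'k::field \<Rightarrow> 'a::comm_ring_1"
  assumes h: "unital_ring_hom \<phi>" and P: "P \<noteq> 0" and ev: "poly (map_poly \<phi> P) y = 0"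
  shows "\<exists>r. \<forall>N\<ge>r. \<exists>g \<alpha>. g = y ^ N * poly (map_poly \<phi> \<alpha>) y \<and> g * g = g \<and> y ^ r * (1 - g) = 0"
proof -
  define t :: "'k poly" where "t = [:0,1:]"
  obtain Q where PQ: "P = t ^ order 0 P * Q" and nd: "\<not> t dvd Q"
    using order_decomp[OF P, of 0] unfolding t_def by auto
  define r where "r = order 0 P"
  obtain c Q1 where Qc: "Q = pCons c Q1" by (cases Q)
  have c0: "c \<noteq> 0" using nd unfolding t_def Qc by (simp add: dvd_iff_poly_eq_0)
  define C where "C = poly (map_poly \<phi> Q) y"
  define D where "D = poly (map_poly \<phi> Q1) y"
  have CD: "C = \<phi> c + y * D" unfolding C_def D_def Qc by (simp add: map_poly_pCons hom_0[OF h])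
  have e2: "y ^ r * C = 0"
    using ev unfolding C_def r_def
    by (subst (asm) PQ) (simp only: ev_mult[OF h] ev_xpow[OF h] t_def)
  define E where "E = poly (map_poly \<phi> (smult (-(1/c)) Q1)) y"
  have ED: "E = \<phi> (-(1/c)) * D" unfolding E_def D_def by (simp only: mp_smult[OF h] poly_smult)
  have inv: "\<phi> (1/c) * \<phi> c = 1" using c0 hom_mult[OF h, of "1/c" c, symmetric] hom_1[OF h] by simp
  have neg: "\<phi> (-(1/c)) = - \<phi> (1/c)"
    using hom_mult[OF h, of "-1" "1/c"] hom_neg1[OF h] by simp
  have key: "1 - y * E = \<phi> (1/c) * C"
    unfolding CD ED neg using inv by (simp add: algebra_simps)
  show ?thesis
  proof (rule exI[of _ r], intro allI impI)
    fix N assume N: "r \<le> N"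
    define \<alpha> where "\<alpha> = (smult (-(1/c)) Q1) ^ N"
    define A where "A = poly (map_poly \<phi> \<alpha>) y"
    define B where "B = \<phi> (1/c) * (\<Sum>i<N. (y*E)^i)"
    have AE: "A = E ^ N" unfolding A_def E_def \<alpha>_def by (simp add: mp_power[OF h])
    have e1: "A * y ^ N + B * C = 1"
    proof -
      have "1 - (y*E)^N = (1 - y*E) * (\<Sum>i<N. (y*E)^i)" by (rule one_diff_power_eq)
      thus ?thesis unfolding AE B_def key by (simp add: algebra_simps power_mult_distrib)
    qed
    define g where "g = y ^ N * A"
    have omg: "1 - g = B * C" using e1 unfolding g_def by (simp add: algebra_simps eq_diff_eq)
    have yr: "y ^ r * (1 - g) = 0"
    proof -
      have "y ^ r * (1 - g) = B * (y ^ r * C)" unfolding omg by (simp add: algebra_simps)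
      thus ?thesis using e2 by simp
    qed
    have "y ^ N = y ^ (N - r) * y ^ r" using N by (simp add: power_add[symmetric])
    hence "g * (1 - g) = (y ^ (N - r) * A) * (y ^ r * (1 - g))" unfolding g_def by (simp add: algebra_simps)
    hence "g * (1 - g) = 0" using yr by simp
    hence "g * g = g" by (simp add: algebra_simps)
    thus "\<exists>g \<alpha>. g = y ^ N * poly (map_poly \<phi> \<alpha>) y \<and> g * g = g \<and> y ^ r * (1 - g) = 0"
      using yr unfolding g_def A_def by blast
  qed
qed

lemma V_scal: "K_subspace \<phi> V \<Longrightarrow> x \<in> V \<Longrightarrow> \<phi> c * x \<in> V"
  unfolding K_subspace_def by blast
lemma V_add: "K_subspace \<phi> V \<Longrightarrow> x \<in> V \<Longrightarrow> y \<in> V \<Longrightarrow> x + y \<in> V"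
  unfolding K_subspace_def by blast
lemma V_0: "K_subspace \<phi> V \<Longrightarrow> 0 \<in> V"
  unfolding K_subspace_def by blast
lemma V_neg: assumes "unital_ring_hom \<phi>" "K_subspace \<phi> V" "x \<in> V" shows "- x \<in> V"
  using V_scal[OF assms(2,3), of "-1"] hom_neg1[OF assms(1)] by simp

lemma V_sum: assumes "K_subspace \<phi> V" "finite F" "\<forall>i\<in>F. f i \<in> V" shows "sum f F \<in> V"
  using assms(2,3) by (induction F rule: finite_induct) (auto intro: V_0[OF assms(1)] V_add[OF assms(1)])

lemma in_V:
  fixes \<phi> :: "'k::field \<Rightarrow> 'a::comm_ring_1"
  assumes h: "unital_ring_hom \<phi>" and sub: "K_subspace \<phi> V" and pw: "\<forall>m\<ge>M. y ^ m \<in> V"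
  shows "M \<le> N \<Longrightarrow> y ^ N * poly (map_poly \<phi> p) y \<in> V"
proof (induction p arbitrary: N)
  case 0 then show ?case using V_0[OF sub] by simp
next
  case (pCons a p)
  have e: "y ^ N * poly (map_poly \<phi> (pCons a p)) y = \<phi> a * y ^ N + y ^ Suc N * poly (map_poly \<phi> p) y"
    by (simp add: map_poly_pCons hom_0[OF h] algebra_simps)
  have 1: "\<phi> a * y ^ N \<in> V" using pCons.prems pw V_scal[OF sub] by blast
  have 2: "y ^ Suc N * poly (map_poly \<phi> p) y \<in> V" using pCons.IH[of "Suc N"] pCons.prems by simp
  show ?case unfolding e by (rule V_add[OF sub 1 2])
qed

lemma idem:
  fixes \<phi> :: "'k::field \<Rightarrow> 'a::comm_ring_1"
  assumes h: "unital_ring_hom \<phi>" and sub: "K_subspace \<phi> V" and alg: "algebraic_over \<phi> y"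
    and pw: "\<forall>m\<ge>M. y ^ m \<in> V"
  shows "\<exists>g r. g * g = g \<and> y ^ r * (1 - g) = 0 \<and> (\<forall>q. g * poly (map_poly \<phi> q) y \<in> V)"
proof -
  obtain P where P: "P \<noteq> 0" "poly (map_poly \<phi> P) y = 0" using alg unfolding algebraic_over_def by blast
  obtain r where r: "\<forall>N\<ge>r. \<exists>g \<alpha>. g = y ^ N * poly (map_poly \<phi> \<alpha>) y \<and> g * g = g \<and> y ^ r * (1 - g) = 0"
    using decomp[OF h P] by blast
  obtain g \<alpha> where g: "g = y ^ max M r * poly (map_poly \<phi> \<alpha>) y" "g * g = g" "y ^ r * (1 - g) = 0"
    using r by (meson max.cobounded2)
  have "\<forall>q. g * poly (map_poly \<phi> q) y \<in> V"
  proof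
    fix q
    have "g * poly (map_poly \<phi> q) y = y ^ max M r * poly (map_poly \<phi> (\<alpha> * q)) y"
      unfolding g(1) ev_mult[OF h] by (simp add: algebra_simps)
    also have "\<dots> \<in> V" by (rule in_V[OF h sub pw]) simp
    finally show "g * poly (map_poly \<phi> q) y \<in> V" .
  qed
  thus ?thesis using g by blast
qed

lemma idem_pow: "(g::'a::comm_ring_1) * g = g \<Longrightarrow> 1 \<le> n \<Longrightarrow> g ^ n = g"
proof (induction n)
  case 0 then show ?case by simp
next
  case (Suc n) then show ?case by (cases n) (auto simp: mult.commute)
qed

lemma absorb: "(a::'a::comm_ring_1) ^ r * (1 - g) = 0 \<Longrightarrow> r \<le> m \<Longrightarrow> a ^ m = a ^ m * g"
proof -
  assume a: "a ^ r * (1 - g) = 0" "r \<le> m"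
  have "a ^ m * (1 - g) = a ^ (m - r) * (a ^ r * (1 - g))"
  proof -
    have "a ^ m = a ^ (m - r) * a ^ r" using a(2) by (metis le_add_diff_inverse2 power_add)
    thus ?thesis by (simp only: mult.assoc)
  qed
  hence "a ^ m * (1 - g) = 0" using a(1) by simp
  thus ?thesis by (simp add: right_diff_distrib)
qed

lemma g_in: assumes h: "unital_ring_hom \<phi>" and "\<forall>q. g * poly (map_poly \<phi> q) y \<in> V" shows "g \<in> V"
  using assms(2) ev_1[OF h, of y] by (metis mult_1_right)

lemma gy_in: assumes h: "unital_ring_hom \<phi>" and "\<forall>q. g * poly (map_poly \<phi> q) y \<in> V" shows "g * y \<in> V"
proof -
  have "poly (map_poly \<phi> [:0,1:]) y = y" using ev_xpow[OF h, of 1 y] by simp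
  thus ?thesis using assms(2) by metis
qed

theorem theorem4p12:
  fixes \<phi> :: "'k::field \<Rightarrow> 'a::comm_ring_1" and V :: "'a set"
  assumes "unital_ring_hom \<phi>"
    and "K_subspace \<phi> V"
    and "\<forall>a\<in>radical_set V. algebraic_over \<phi> a"
  shows "mathieu_subspace V \<longleftrightarrow> is_ideal (radical_set V)"
proof -
  note h = assms(1) and sub = assms(2) and alg = assms(3)
  define S where "S = radical_set V"
  have Sdef: "x \<in> S \<longleftrightarrow> (\<exists>N. \<forall>m\<ge>N. x ^ m \<in> V)" for x unfolding S_def radical_set_def by simp
  have idS: "\<exists>g r. g * g = g \<and> x ^ r * (1 - g) = 0 \<and> g \<in> V \<and> g * x \<in> V" if "x \<in> S" for x
  proof -
    from that obtain M where M: "\<forall>m\<ge>M. x ^ m \<in> V" unfolding Sdef by (elim exE)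
    have ax: "algebraic_over \<phi> x" using alg that unfolding S_def by (rule bspec)
    obtain g r where g: "g * g = g" "x ^ r * (1 - g) = 0" and q: "\<forall>q. g * poly (map_poly \<phi> q) x \<in> V"
      using idem[OF h sub ax M] by (elim exE conjE)
    have "g \<in> V" by (rule g_in[OF h q])
    moreover have "g * x \<in> V" by (rule gy_in[OF h q])
    ultimately show ?thesis using g by blast
  qed
  show ?thesis
  proof
    assume ms: "mathieu_subspace V"
    have eA: "\<exists>g r. (\<forall>b. b * g \<in> V) \<and> x ^ r * (1 - g) = 0" if xS: "x \<in> S" for x
    proof -
      obtain g r where g: "g * g = g" "x ^ r * (1 - g) = 0" "g \<in> V" using idS[OF xS] by blast
      have "\<forall>m\<ge>1. g ^ m \<in> V" using g(3) idem_pow[OF g(1)] by simp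
      hence "\<forall>b. \<exists>N. \<forall>m\<ge>N. b * g ^ m \<in> V" using ms unfolding mathieu_subspace_def by blast
      have "b * g \<in> V" for b
      proof -
        obtain N where "\<forall>m\<ge>N. b * g ^ m \<in> V" using \<open>\<forall>b. \<exists>N. \<forall>m\<ge>N. b * g ^ m \<in> V\<close> by blast
        hence "b * g ^ max N 1 \<in> V" by simp
        thus ?thesis using idem_pow[OF g(1), of "max N 1"] by simp
      qed
      thus ?thesis using g by blast
    qed
    show "is_ideal (radical_set V)"
      unfolding is_ideal_def S_def[symmetric]
    proof (intro conjI ballI allI)
      show "0 \<in> S" unfolding Sdef using V_0[OF sub] by (intro exI[of _ 1] allI impI) (simp add: zero_power)
    next
      fix x y assume xy: "x \<in> S" "y \<in> S"
      obtain gx rx where gx: "\<forall>b. b * gx \<in> V" "x ^ rx * (1 - gx) = 0" using eA[OF xy(1)] by blast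
      obtain gy ry where gy: "\<forall>b. b * gy \<in> V" "y ^ ry * (1 - gy) = 0" using eA[OF xy(2)] by blast
      have "\<forall>m\<ge>rx + ry. (x + y) ^ m \<in> V"
      proof (intro allI impI)
        fix m assume m: "rx + ry \<le> m"
        have "(x + y) ^ m = (\<Sum>k\<le>m. of_nat (m choose k) * x ^ k * y ^ (m - k))"
          by (rule binomial_ring)
        also have "\<dots> \<in> V"
        proof (rule V_sum[OF sub], simp, intro ballI)
          fix k assume k: "k \<in> {..m}"
          show "of_nat (m choose k) * x ^ k * y ^ (m - k) \<in> V"
          proof (cases "rx \<le> k")
            case True
            hence "x ^ k = x ^ k * gx" using absorb gx(2) by blast
            hence "of_nat (m choose k) * x ^ k * y ^ (m - k) = of_nat (m choose k) * (x ^ k * gx) * y ^ (m - k)"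
              by (rule arg_cong[where f="\<lambda>t. of_nat (m choose k) * t * y ^ (m - k)"])
            also have "\<dots> = (of_nat (m choose k) * x ^ k * y ^ (m - k)) * gx" by (simp only: ac_simps)
            finally have "of_nat (m choose k) * x ^ k * y ^ (m - k) = (of_nat (m choose k) * x ^ k * y ^ (m - k)) * gx" .
            thus ?thesis using gx(1) by metis
          next
            case False
            hence "ry \<le> m - k" using m by simp
            hence "y ^ (m - k) = y ^ (m - k) * gy" using absorb gy(2) by blast
            hence "of_nat (m choose k) * x ^ k * y ^ (m - k) = of_nat (m choose k) * x ^ k * (y ^ (m - k) * gy)"
              by (rule arg_cong[where f="\<lambda>t. of_nat (m choose k) * x ^ k * t"])
            also have "\<dots> = (of_nat (m choose k) * x ^ k * y ^ (m - k)) * gy" by (simp only: ac_simps)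
            finally have "of_nat (m choose k) * x ^ k * y ^ (m - k) = (of_nat (m choose k) * x ^ k * y ^ (m - k)) * gy" .
            thus ?thesis using gy(1) by metis
          qed
        qed
        finally show "(x + y) ^ m \<in> V" .
      qed
      thus "x + y \<in> S" unfolding Sdef by blast
    next
      fix b x assume x: "x \<in> S"
      obtain gx rx where gx: "\<forall>b. b * gx \<in> V" "x ^ rx * (1 - gx) = 0" using eA[OF x] by blast
      have "\<forall>m\<ge>rx. (b * x) ^ m \<in> V"
      proof (intro allI impI)
        fix m assume "rx \<le> m"
        hence "x ^ m = x ^ m * gx" using absorb gx(2) by blast
        hence "b ^ m * x ^ m = b ^ m * (x ^ m * gx)" by (rule arg_cong)
        hence "(b * x) ^ m = (b ^ m * x ^ m) * gx" by (simp only: power_mult_distrib ac_simps)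
        thus "(b * x) ^ m \<in> V" using gx(1) by metis
      qed
      thus "b * x \<in> S" unfolding Sdef by blast
    qed
  next
    assume "is_ideal (radical_set V)"
    hence id: "0 \<in> S" "\<And>x y. x \<in> S \<Longrightarrow> y \<in> S \<Longrightarrow> x + y \<in> S" "\<And>b x. x \<in> S \<Longrightarrow> b * x \<in> S"
      unfolding is_ideal_def S_def by blast+
    show "mathieu_subspace V"
      unfolding mathieu_subspace_def
    proof (intro allI impI)
      fix a b assume pa: "\<forall>m\<ge>1. a ^ m \<in> V"
      have aS: "a \<in> S" using pa Sdef by blast
      obtain g r where g: "g * g = g" "a ^ r * (1 - g) = 0" "g \<in> V" using idS[OF aS] by blast
      have gS: "g \<in> S" unfolding Sdef using g(3) idem_pow[OF g(1)] by (intro exI[of _ 1]) simp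
      have gA: "g * c \<in> V" for c
      proof -
        define x where "x = g * c"
        have xS: "x \<in> S" unfolding x_def using id(3)[OF gS, of c] by (simp add: mult.commute)
        obtain f s where f: "f * f = f" "x ^ s * (1 - f) = 0" "f * x \<in> V" using idS[OF xS] by blast
        define z where "z = (1 - f) * x"
        define n0 where "n0 = max s 1"
        have omf: "(1 - f) ^ n = 1 - f" if "1 \<le> n" for n
          using idem_pow[of "1 - f" n] that f(1) by (simp add: algebra_simps)
        have zn0: "z ^ n0 = 0"
        proof -
          have "z ^ n0 = (1 - f) ^ n0 * x ^ n0" unfolding z_def by (simp add: power_mult_distrib)
          also have "\<dots> = x ^ n0 * (1 - f)" using omf[of n0] n0_def by (simp add: mult.commute)
          also have "\<dots> = 0"
          proof -
            have "s \<le> n0" unfolding n0_def by simp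
            hence "x ^ n0 = x ^ (n0 - s) * x ^ s" by (metis le_add_diff_inverse2 power_add)
            hence "x ^ n0 * (1 - f) = x ^ (n0 - s) * (x ^ s * (1 - f))" by (simp only: mult.assoc)
            thus ?thesis using f(2) by simp
          qed
          finally show ?thesis .
        qed
        have zS: "z \<in> S" unfolding Sdef
        proof (intro exI[of _ n0] allI impI)
          fix m assume "n0 \<le> m"
          hence "z ^ m = z ^ (m - n0) * z ^ n0" by (simp add: power_add[symmetric])
          thus "z ^ m \<in> V" using zn0 V_0[OF sub] by simp
        qed
        define u where "u = g + z"
        have uS: "u \<in> S" unfolding u_def by (rule id(2)[OF gS zS])
        have gz: "g * z = z"
        proof -
          have "g * ((1 - f) * (g * c)) = (1 - f) * ((g * g) * c)" by (simp only: ac_simps)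
          thus ?thesis using g(1) unfolding z_def x_def by simp
        qed
        have ug: "u = g * (1 + z)" unfolding u_def using gz by (simp add: algebra_simps)
        obtain hh p where hh: "hh * hh = hh" "u ^ p * (1 - hh) = 0" "hh * u \<in> V" using idS[OF uS] by blast
        define v where "v = g * (\<Sum>i<n0. (- z) ^ i)"
        have uv: "u * v = g"
        proof -
          have "1 - (- z) ^ n0 = (1 - (- z)) * (\<Sum>i<n0. (- z) ^ i)" by (rule one_diff_power_eq)
          hence "(1 + z) * (\<Sum>i<n0. (- z) ^ i) = 1"
            using zn0 by (simp add: power_minus')
          have "u * v = (g * g) * ((1 + z) * (\<Sum>i<n0. (- z) ^ i))"
            unfolding ug v_def by (simp only: ac_simps)
          thus ?thesis using \<open>(1 + z) * (\<Sum>i<n0. (- z) ^ i) = 1\<close> g(1) by simp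
        qed
        have gpow: "g * g ^ p = g" using idem_pow[OF g(1), of "Suc p"] by simp
        have "g * (1 - hh) = g * (u * v) ^ p * (1 - hh)" using gpow uv by simp
        also have "\<dots> = g * v ^ p * (u ^ p * (1 - hh))" by (simp add: power_mult_distrib algebra_simps)
        also have "\<dots> = 0" using hh(2) by simp
        finally have ghh: "g * (1 - hh) = 0" .
        have gu: "g * u = u" unfolding u_def using g(1) gz by (simp add: algebra_simps)
        have "hh * u = u"
        proof -
          have "g = hh * g" using ghh by (simp add: algebra_simps)
          have "hh * u = hh * (g * u)" using gu by simp
          also have "\<dots> = (hh * g) * u" by (simp only: mult.assoc)
          also have "\<dots> = u" using \<open>g = hh * g\<close> gu by simp
          finally show ?thesis .
        qed
        hence uV: "u \<in> V" using hh(3) by simp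
        have zV: "z \<in> V" using V_add[OF sub uV V_neg[OF h sub g(3)]] unfolding u_def by simp
        have "x = f * x + z" unfolding z_def by (simp add: algebra_simps)
        hence "x \<in> V" using V_add[OF sub f(3) zV] by simp
        thus ?thesis unfolding x_def .
      qed
      have "\<forall>m\<ge>r. b * a ^ m \<in> V"
      proof (intro allI impI)
        fix m assume "r \<le> m"
        hence "a ^ m = a ^ m * g" using absorb g(2) by blast
        hence "b * a ^ m = b * (a ^ m * g)" by (rule arg_cong)
        also have "\<dots> = g * (b * a ^ m)" by (simp only: ac_simps)
        finally have "b * a ^ m = g * (b * a ^ m)" .
        thus "b * a ^ m \<in> V" using gA by metis
      qed
      thus "\<exists>N. \<forall>m\<ge>N. b * a ^ m \<in> V" by blast
    qed
  qed
qed

end
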